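(* Let $k\ge 1$, let $d=k+1$, and let $A$ be a $d\times d$ matrix with entries in $\{0,1\}$ which is primitive (i.e. $A^p$ has all entries positive for some integer $p\ge1$). Then $A\in P^*(k)$ if and only if $A$ has a positive row, i.e. there is $i_0\in D$ with $A(i_0,j)=1$ for all $j\in D$.
   Context: Let $K=\{1,\dots,k\}$ and $D=\{1,\dots,d\}$. The $k$-tree $\tau$ is the set $K^*$ of all finite words over $K$; the empty word $\epsilon$ is the root, and for a word $x$ and $g\in K$ the word $xg$ is a child of $x$. $L_n$ denotes the set of words of length exactly $n$. For a $d\times d$ $0,1$ matrix $A$, let $X_A=\{\lambda\in D^{\tau}: A(\lambda(x),\lambda(xg))>0 \text{ for all } x\in\tau,\ g\in K\}$. For $i\in D$ and $\mathcal T\subseteq\tau$, the arrival set is $\mathcal A(i,\epsilon,\mathcal T)=\{\lambda|_{\mathcal T}:\lambda\in X_A,\ \lambda(\epsilon)=i\}$. The matrix $A$ is in $P^*(k,n)$ if $\mathcal A(i,\epsilon,L_n)=D^{L_n}$ for every $i\in D$ (i.e. every labeling of $L_n$ by $D$ is achievable from every root symbol), and $P^*(k)=\bigcup_{n\ge0}P^*(k,n)$. *)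

theory Defs
  imports "HOL-Library.FuncSet"
begin

text \<open>Alphabet K = {1..k}, symbols D = {1..d}. Words are lists over K;
  the word x g (child of x) is x @ [g]; the root is []. A d x d matrix is a
  function nat => nat => nat, only its entries on D x D being relevant.\<close>

definition ktree :: "nat \<Rightarrow> nat list set" where
  "ktree k = {x. set x \<subseteq> {1..k}}"

definition level :: "nat \<Rightarrow> nat \<Rightarrow> nat list set" where
  "level k n = {x \<in> ktree k. length x = n}"

definition XA :: "nat \<Rightarrow> nat \<Rightarrow> (nat \<Rightarrow> nat \<Rightarrow> nat) \<Rightarrow> (nat list \<Rightarrow> nat) set" where
  "XA k d A = {lam. (\<forall>x\<in>ktree k. lam x \<in> {1..d}) \<and>
                    (\<forall>x\<in>ktree k. \<forall>g\<in>{1..k}. A (lam x) (lam (x @ [g])) > 0)}"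

definition arrival ::
  "nat \<Rightarrow> nat \<Rightarrow> (nat \<Rightarrow> nat \<Rightarrow> nat) \<Rightarrow> nat \<Rightarrow> nat list set \<Rightarrow> (nat list \<Rightarrow> nat) set" where
  "arrival k d A i T = {restrict lam T | lam. lam \<in> XA k d A \<and> lam [] = i}"

definition in_Pstar_n :: "nat \<Rightarrow> nat \<Rightarrow> (nat \<Rightarrow> nat \<Rightarrow> nat) \<Rightarrow> nat \<Rightarrow> bool" where
  "in_Pstar_n k d A n \<longleftrightarrow>
     (\<forall>i\<in>{1..d}. arrival k d A i (level k n) = (level k n \<rightarrow>\<^sub>E {1..d}))"

definition in_Pstar :: "nat \<Rightarrow> nat \<Rightarrow> (nat \<Rightarrow> nat \<Rightarrow> nat) \<Rightarrow> bool" where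
  "in_Pstar k d A \<longleftrightarrow> (\<exists>n. in_Pstar_n k d A n)"

fun matpow :: "nat \<Rightarrow> (nat \<Rightarrow> nat \<Rightarrow> nat) \<Rightarrow> nat \<Rightarrow> nat \<Rightarrow> nat \<Rightarrow> nat" where
  "matpow d A 0 = (\<lambda>i j. if i = j then 1 else 0)"
| "matpow d A (Suc p) = (\<lambda>i j. \<Sum>l\<in>{1..d}. matpow d A p i l * A l j)"

definition primitive :: "nat \<Rightarrow> (nat \<Rightarrow> nat \<Rightarrow> nat) \<Rightarrow> bool" where
  "primitive d A \<longleftrightarrow> (\<exists>p\<ge>1. \<forall>i\<in>{1..d}. \<forall>j\<in>{1..d}. matpow d A p i j > 0)"

end

theory Submission
  imports Defs
begin

definition ee :: "nat \<Rightarrow> nat \<Rightarrow> nat" where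
  "ee m g = (if g < m then g else g + 1)"

definition good :: "(nat \<Rightarrow> nat \<Rightarrow> nat) \<Rightarrow> nat \<Rightarrow> nat \<Rightarrow> nat \<Rightarrow> bool" where
  "good A d j m \<longleftrightarrow> (\<forall>l\<in>{1..d}-{m}. A j l > 0)"

fun muR :: "(nat \<Rightarrow> nat) \<Rightarrow> nat \<Rightarrow> nat list \<Rightarrow> nat" where
  "muR h r [] = r"
| "muR h r (g # ys) = ee (h (muR h r ys)) g"

lemma ee_range: "g \<in> {1..k} \<Longrightarrow> ee m g \<in> {1..k+1}"
  by (auto simp: ee_def)

lemma ee_onto:
  assumes "m \<in> {1..k+1}" "l \<in> {1..k+1} - {m}"
  shows "\<exists>g\<in>{1..k}. ee m g = l"
proof (cases "l < m")
  case True
  then show ?thesis using assms by (intro bexI[of _ l]) (auto simp: ee_def)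
next
  case False
  then show ?thesis using assms by (intro bexI[of _ "l - 1"]) (auto simp: ee_def)
qed

lemma ktree_snoc: "x \<in> ktree k \<Longrightarrow> g \<in> {1..k} \<Longrightarrow> x @ [g] \<in> ktree k"
  by (auto simp: ktree_def)

lemma children_good:
  assumes "d = k + 1" "lam \<in> XA k d A" "x \<in> ktree k" "m \<in> {1..d}"
    "\<forall>g\<in>{1..k}. lam (x @ [g]) = ee m g"
  shows "good A d (lam x) m"
  unfolding good_def
proof
  fix l assume "l \<in> {1..d} - {m}"
  then obtain g where g: "g \<in> {1..k}" "ee m g = l" using ee_onto[of m k l] assms by auto
  have "A (lam x) (lam (x @ [g])) > 0" using assms(2,3) g(1) by (auto simp: XA_def)
  then show "A (lam x) l > 0" using assms(5) g by auto
qed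

lemma muR_range: "set ys \<subseteq> {1..k} \<Longrightarrow> r \<in> {1..k+1} \<Longrightarrow> muR h r ys \<in> {1..k+1}"
proof (induction ys)
  case Nil then show ?case by simp
next
  case (Cons g ys) then show ?case using ee_range[of g k] by auto
qed

lemma forcing:
  assumes dk: "d = k + 1" and lam: "lam \<in> XA k d A" and r: "r \<in> {1..d}"
    and hD: "\<forall>j\<in>{1..d}. h j \<in> {1..d}"
    and uniq: "\<forall>j\<in>{1..d}. \<forall>j'\<in>{1..d}. good A d j' (h j) \<longrightarrow> j' = j"
    and eq: "restrict lam (level k n) = restrict (\<lambda>x. muR h r (rev x)) (level k n)"
  shows "lam [] = r"
proof -
  have mD: "x \<in> ktree k \<Longrightarrow> muR h r (rev x) \<in> {1..d}" for x
    using muR_range[of "rev x" k r h] r dk by (auto simp: ktree_def)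
  have main: "\<forall>x\<in>ktree k. length x = n - t \<longrightarrow> lam x = muR h r (rev x)" if "t \<le> n" for t
    using that
  proof (induction t)
    case 0
    show ?case
    proof (intro ballI impI)
      fix x assume "x \<in> ktree k" "length x = n - 0"
      then have "x \<in> level k n" by (auto simp: level_def)
      then show "lam x = muR h r (rev x)" using fun_cong[OF eq, of x] by simp
    qed
  next
    case (Suc t)
    show ?case
    proof (intro ballI impI)
      fix x assume x: "x \<in> ktree k" "length x = n - Suc t"
      let ?m = "h (muR h r (rev x))"
      have mm: "?m \<in> {1..d}" using hD mD[OF x(1)] by auto
      have "\<forall>g\<in>{1..k}. lam (x @ [g]) = ee ?m g"
      proof
        fix g assume g: "g \<in> {1..k}"
        have "x @ [g] \<in> ktree k" using ktree_snoc[OF x(1) g] .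
        moreover have "length (x @ [g]) = n - t" using x Suc.prems by auto
        ultimately have "lam (x @ [g]) = muR h r (rev (x @ [g]))"
          using Suc.IH Suc.prems by auto
        then show "lam (x @ [g]) = ee ?m g" by simp
      qed
      then have "good A d (lam x) ?m" using children_good[OF dk lam x(1) mm] by blast
      moreover have "lam x \<in> {1..d}" using lam x(1) by (auto simp: XA_def)
      ultimately show "lam x = muR h r (rev x)" using uniq mD[OF x(1)] by blast
    qed
  qed
  have "[] \<in> ktree k" by (simp add: ktree_def)
  then show ?thesis using main[of n] by simp
qed

lemma pstar_n_D:
  assumes "in_Pstar_n k d A n" "i \<in> {1..d}" "ell \<in> level k n \<rightarrow>\<^sub>E {1..d}"
  shows "\<exists>lam\<in>XA k d A. lam [] = i \<and> restrict lam (level k n) = ell"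
proof -
  have "ell \<in> arrival k d A i (level k n)" using assms unfolding in_Pstar_n_def by blast
  then show ?thesis unfolding arrival_def by blast
qed

lemma no_pos_zero:
  assumes A01: "\<forall>i\<in>{1..d}. \<forall>j\<in>{1..d}. A i j \<in> {0, 1}"
    and nopos: "\<not> (\<exists>i0\<in>{1..d}. \<forall>j\<in>{1..d}. A i0 j = 1)" and j: "j \<in> {1..d}"
  shows "\<exists>l\<in>{1..d}. A j l = 0"
  using A01 nopos j by blast

lemma good_unique_m:
  assumes A01: "\<forall>i\<in>{1..d}. \<forall>j\<in>{1..d}. A i j \<in> {0, 1}"
    and nopos: "\<not> (\<exists>i0\<in>{1..d}. \<forall>j\<in>{1..d}. A i0 j = 1)" and j: "j \<in> {1..d}"
    and "m \<in> {1..d}" "m' \<in> {1..d}" "good A d j m" "good A d j m'"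
  shows "m = m'"
proof -
  obtain l where l: "l \<in> {1..d}" "A j l = 0" using no_pos_zero[OF A01 nopos j] by blast
  have "l = m" using assms(6) l unfolding good_def by force
  moreover have "l = m'" using assms(7) l unfolding good_def by force
  ultimately show ?thesis by simp
qed

lemma forward:
  assumes k1: "k \<ge> 1" and dk: "d = k + 1"
    and A01: "\<forall>i\<in>{1..d}. \<forall>j\<in>{1..d}. A i j \<in> {0, 1}"
    and nopos: "\<not> (\<exists>i0\<in>{1..d}. \<forall>j\<in>{1..d}. A i0 j = 1)"
  shows "\<not> in_Pstar_n k d A n"
proof
  assume P: "in_Pstar_n k d A n"
  have two: "(2::nat) \<in> {1..d}" and one: "(1::nat) \<in> {1..d}" using k1 dk by auto
  show False
  proof (cases "\<exists>m\<in>{1..d}. \<forall>j\<in>{1..d}. \<not> good A d j m")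
    case True
    then obtain m where m: "m \<in> {1..d}" "\<forall>j\<in>{1..d}. \<not> good A d j m" by blast
    show False
    proof (cases n)
      case 0
      have lev: "level k 0 = {[]}" by (auto simp: level_def ktree_def)
      let ?ell = "restrict (\<lambda>_. 1::nat) {[]}"
      have "?ell \<in> level k n \<rightarrow>\<^sub>E {1..d}" using lev 0 one by auto
      then obtain lam where "lam [] = 2" "restrict lam (level k n) = ?ell"
        using pstar_n_D[OF P two] by blast
      then have "restrict lam (level k n) [] = ?ell []" by simp
      then show False using lev 0 \<open>lam [] = 2\<close> by simp
    next
      case (Suc n')
      let ?ell = "restrict (\<lambda>x. ee m (last x)) (level k n)"
      have "?ell \<in> level k n \<rightarrow>\<^sub>E {1..d}"
      proof (rule restrict_PiE_iff[THEN iffD2], intro ballI)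
        fix x assume "x \<in> level k n"
        then have "x \<noteq> []" "set x \<subseteq> {1..k}" using Suc by (auto simp: level_def ktree_def)
        then have "last x \<in> {1..k}" using last_in_set by blast
        then show "ee m (last x) \<in> {1..d}" using ee_range[of "last x" k m] dk by simp
      qed
      then obtain lam where lam: "lam \<in> XA k d A" "restrict lam (level k n) = ?ell"
        using pstar_n_D[OF P two] by blast
      let ?x = "replicate n' (1::nat)"
      have x: "?x \<in> ktree k" using k1 by (auto simp: ktree_def)
      have "\<forall>g\<in>{1..k}. lam (?x @ [g]) = ee m g"
      proof
        fix g assume g: "g \<in> {1..k}"
        have "?x @ [g] \<in> level k n" using ktree_snoc[OF x g] Suc by (auto simp: level_def)
        then show "lam (?x @ [g]) = ee m g" using fun_cong[OF lam(2), of "?x @ [g]"] by simp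
      qed
      then have "good A d (lam ?x) m" using children_good[OF dk lam(1) x m(1)] by blast
      moreover have "lam ?x \<in> {1..d}" using lam(1) x by (auto simp: XA_def)
      ultimately show False using m(2) by blast
    qed
  next
    case False
    then have ex: "\<forall>m\<in>{1..d}. \<exists>j\<in>{1..d}. good A d j m" by blast
    define tau where "tau m = (SOME j. j \<in> {1..d} \<and> good A d j m)" for m
    have tau: "tau m \<in> {1..d} \<and> good A d (tau m) m" if "m \<in> {1..d}" for m
    proof -
      have "\<exists>j. j \<in> {1..d} \<and> good A d j m" using ex that by blast
      then show ?thesis unfolding tau_def by (rule someI_ex)
    qed
    have inj: "inj_on tau {1..d}"
    proof (rule inj_onI)
      fix m m' assume "m \<in> {1..d}" "m' \<in> {1..d}" "tau m = tau m'"
      then show "m = m'" using good_unique_m[OF A01 nopos, of "tau m" m m'] tau[of m] tau[of m'] by simp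
    qed
    have surj: "tau ` {1..d} = {1..d}"
    proof (rule endo_inj_surj[OF _ _ inj])
      show "tau ` {1..d} \<subseteq> {1..d}" using tau by auto
    qed simp
    define h where "h = inv_into {1..d} tau"
    have hD: "\<forall>j\<in>{1..d}. h j \<in> {1..d}"
    proof
      fix j assume "j \<in> {1..d}"
      then have "j \<in> tau ` {1..d}" using surj by simp
      then show "h j \<in> {1..d}" unfolding h_def by (rule inv_into_into)
    qed
    have uniq: "\<forall>j\<in>{1..d}. \<forall>j'\<in>{1..d}. good A d j' (h j) \<longrightarrow> j' = j"
    proof (intro ballI impI)
      fix j j' assume jj: "j \<in> {1..d}" "j' \<in> {1..d}" and g: "good A d j' (h j)"
      have "j' \<in> tau ` {1..d}" using surj jj(2) by simp
      then obtain m' where m': "m' \<in> {1..d}" "j' = tau m'" by blast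
      have gm': "good A d j' m'" using tau[OF m'(1)] m'(2) by simp
      have hj: "h j \<in> {1..d}" using hD jj(1) by blast
      have "m' = h j" using good_unique_m[OF A01 nopos jj(2) m'(1) hj gm' g] .
      then show "j' = j" using m'(2) unfolding h_def using surj jj(1) by (simp add: f_inv_into_f)
    qed
    let ?mu = "\<lambda>x. muR h 1 (rev x)"
    let ?ell = "restrict ?mu (level k n)"
    have "?ell \<in> level k n \<rightarrow>\<^sub>E {1..d}"
    proof (rule restrict_PiE_iff[THEN iffD2], intro ballI)
      fix x assume "x \<in> level k n"
      then show "?mu x \<in> {1..d}" using muR_range[of "rev x" k 1 h] dk
        by (auto simp: level_def ktree_def)
    qed
    then obtain lam where lam: "lam \<in> XA k d A" "lam [] = 2" "restrict lam (level k n) = ?ell"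
      using pstar_n_D[OF P two] by blast
    have "lam [] = 1" using forcing[OF dk lam(1) one hD uniq lam(3)] .
    then show False using lam(2) by simp
  qed
qed

lemma walk:
  assumes i: "i \<in> {1..d}"
  shows "j \<in> {1..d} \<Longrightarrow> matpow d A p i j > 0 \<Longrightarrow>
    \<exists>v. v 0 = i \<and> v p = j \<and> (\<forall>m\<le>p. v m \<in> {1..d}) \<and> (\<forall>m<p. A (v m) (v (Suc m)) > 0)"
proof (induction p arbitrary: j)
  case 0
  then have "i = j" by (simp split: if_splits)
  then show ?case using i by (intro exI[of _ "\<lambda>_. i"]) auto
next
  case (Suc p)
  have "(\<Sum>l\<in>{1..d}. matpow d A p i l * A l j) > 0" using Suc.prems by simp
  then obtain l where l: "l \<in> {1..d}" "matpow d A p i l * A l j > 0"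
    by (metis (no_types, lifting) gr0I less_irrefl sum.neutral)
  then obtain v where v: "v 0 = i" "v p = l" "\<forall>m\<le>p. v m \<in> {1..d}" "\<forall>m<p. A (v m) (v (Suc m)) > 0"
    using Suc.IH[of l] by auto
  have Al: "A l j > 0" using l(2) by simp
  show ?case
  proof (intro exI[of _ "v(Suc p := j)"] conjI allI impI)
    show "(v(Suc p := j)) 0 = i" using v by simp
    show "(v(Suc p := j)) (Suc p) = j" by simp
    fix m
    show "m \<le> Suc p \<Longrightarrow> (v(Suc p := j)) m \<in> {1..d}" using v(3) Suc.prems(1)
      by (cases "m = Suc p") auto
    show "m < Suc p \<Longrightarrow> A ((v(Suc p := j)) m) ((v(Suc p := j)) (Suc m)) > 0"
      using v Al by (cases "m = p") auto
  qed
qed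

lemma funpow_D: "(\<forall>j\<in>S. s j \<in> S) \<Longrightarrow> a \<in> S \<Longrightarrow> (s ^^ n) a \<in> S"
  by (induction n) auto

lemma backward:
  assumes dk: "d = k + 1"
    and A01: "\<forall>i\<in>{1..d}. \<forall>j\<in>{1..d}. A i j \<in> {0, 1}"
    and prim: "primitive d A"
    and pos: "\<exists>i0\<in>{1..d}. \<forall>j\<in>{1..d}. A i0 j = 1"
  shows "in_Pstar k d A"
proof -
  obtain i0 where i0: "i0 \<in> {1..d}" "\<forall>j\<in>{1..d}. A i0 j = 1" using pos by blast
  obtain p where p: "p \<ge> 1" "\<forall>i\<in>{1..d}. \<forall>j\<in>{1..d}. matpow d A p i j > 0"
    using prim unfolding primitive_def by blast
  define s where "s j = (SOME l. l \<in> {1..d} \<and> A j l > 0)" for j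
  have sD: "s j \<in> {1..d} \<and> A j (s j) > 0" if j: "j \<in> {1..d}" for j
  proof -
    have "matpow d A p j j > 0" using p(2) j by blast
    then obtain v where v: "v 0 = j" "\<forall>m\<le>p. v m \<in> {1..d}" "\<forall>m<p. A (v m) (v (Suc m)) > 0"
      using walk[OF j j, of A p] by blast
    have p0: "0 < p" using p(1) by simp
    have a1: "v 1 \<in> {1..d}" using v(2) p(1) by blast
    have "A (v 0) (v (Suc 0)) > 0" using v(3) p0 by blast
    then have "v 1 \<in> {1..d} \<and> A j (v 1) > 0" using a1 v(1) by simp
    then have "\<exists>l. l \<in> {1..d} \<and> A j l > 0" by blast
    then show ?thesis unfolding s_def by (rule someI_ex)
  qed
  have sS: "\<forall>j\<in>{1..d}. s j \<in> {1..d}" using sD by blast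
  have "in_Pstar_n k d A (Suc p)"
    unfolding in_Pstar_n_def
  proof (intro ballI equalityI subsetI)
    fix i f assume i: "i \<in> {1..d}" and f: "f \<in> arrival k d A i (level k (Suc p))"
    then obtain lam where "f = restrict lam (level k (Suc p))" "lam \<in> XA k d A"
      unfolding arrival_def by blast
    then show "f \<in> level k (Suc p) \<rightarrow>\<^sub>E {1..d}"
      by (auto simp: XA_def level_def)
  next
    fix i ell assume i: "i \<in> {1..d}" and ell: "ell \<in> level k (Suc p) \<rightarrow>\<^sub>E {1..d}"
    have "matpow d A p i i0 > 0" using p(2) i i0(1) by blast
    then obtain v where v: "v 0 = i" "v p = i0" "\<forall>m\<le>p. v m \<in> {1..d}" "\<forall>m<p. A (v m) (v (Suc m)) > 0"
      using walk[OF i i0(1), of A p] by blast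
    define lam where "lam x = (if length x \<le> p then v (length x)
        else (s ^^ (length x - Suc p)) (ell (take (Suc p) x)))" for x
    have labD: "lam x \<in> {1..d}" if x: "x \<in> ktree k" for x
    proof (cases "length x \<le> p")
      case True then show ?thesis using v(3) by (simp add: lam_def)
    next
      case False
      then have "take (Suc p) x \<in> level k (Suc p)" using x set_take_subset[of "Suc p" x]
        by (auto simp: level_def ktree_def)
      then have "ell (take (Suc p) x) \<in> {1..d}" using ell by auto
      then show ?thesis using False funpow_D[OF sS] by (simp add: lam_def)
    qed
    have "lam \<in> XA k d A"
      unfolding XA_def
    proof (intro CollectI conjI ballI)
      fix x assume "x \<in> ktree k" then show "lam x \<in> {1..d}" by (rule labD)
    next
      fix x g assume x: "x \<in> ktree k" and g: "g \<in> {1..k}"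
      show "A (lam x) (lam (x @ [g])) > 0"
      proof (cases "length x < p")
        case True then show ?thesis using v(4) by (simp add: lam_def)
      next
        case False
        show ?thesis
        proof (cases "length x = p")
          case True
          have "lam (x @ [g]) \<in> {1..d}" using labD ktree_snoc[OF x g] by blast
          then show ?thesis using True i0 v(2) by (simp add: lam_def)
        next
          case False2: False
          then have gt: "length x > p" using False by simp
          obtain q where q: "length x = Suc p + q" using gt less_imp_Suc_add by blast
          have t: "take (Suc p) (x @ [g]) = take (Suc p) x" using gt by simp
          have "lam (x @ [g]) = (s ^^ Suc q) (ell (take (Suc p) x))"
            using q t by (simp add: lam_def)
          also have "\<dots> = s (lam x)" using q by (simp add: lam_def)
          finally have "lam (x @ [g]) = s (lam x)" .
          moreover have "A (lam x) (s (lam x)) > 0" using sD[OF labD[OF x]] by blast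
          ultimately show ?thesis by (simp only:)
        qed
      qed
    qed
    moreover have "lam [] = i" using v(1) by (simp add: lam_def)
    moreover have "restrict lam (level k (Suc p)) = ell"
    proof
      fix x show "restrict lam (level k (Suc p)) x = ell x"
      proof (cases "x \<in> level k (Suc p)")
        case True then show ?thesis by (simp add: lam_def level_def)
      next
        case False
        have "ell x = undefined" using PiE_arb[OF ell False] .
        moreover have "restrict lam (level k (Suc p)) x = undefined" using False by simp
        ultimately show ?thesis by simp
      qed
    qed
    ultimately show "ell \<in> arrival k d A i (level k (Suc p))"
      unfolding arrival_def by blast
  qed
  then show ?thesis unfolding in_Pstar_def by blast
qed

theorem proposition2p4:
  fixes k d :: nat and A :: "nat \<Rightarrow> nat \<Rightarrow> nat"
  assumes "k \<ge> 1"
    and "d = k + 1"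
    and "\<forall>i\<in>{1..d}. \<forall>j\<in>{1..d}. A i j \<in> {0, 1}"
    and "primitive d A"
  shows "in_Pstar k d A \<longleftrightarrow> (\<exists>i0\<in>{1..d}. \<forall>j\<in>{1..d}. A i0 j = 1)"
  using forward[OF assms(1,2,3)] backward[OF assms(2,3,4)] unfolding in_Pstar_def by blast

end
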